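(* Let $\mathsf{G}$ be a global type. If $\mathsf{G}$ is bounded, then its event structure $\mathcal{S}(\mathsf{G})$ is semantically bounded.
   Context: Participants are ranged over by $\mathsf{p},\mathsf{q},\mathsf{r},\mathsf{s}$ and message labels by $\lambda$. Global types are defined coinductively (and assumed regular, i.e. with finitely many distinct subtrees): $\mathsf{G} ::= \mathsf{p}\to\mathsf{q}:\{\lambda_i;\mathsf{G}_i\}_{i\in I} \mid \mathsf{End}$, with $I$ finite non-empty and the $\lambda_i$ pairwise distinct. A communication is $\alpha=\mathsf{p}\mathsf{q}\lambda$ with $\mathrm{part}(\mathsf{p}\mathsf{q}\lambda)=\{\mathsf{p},\mathsf{q}\}$; a trace is a finite sequence of communications, $\mathrm{part}$ extended to traces by union, $|\sigma|$ its length. $\mathrm{Tr}(\mathsf{End})=\emptyset$, $\mathrm{Tr}(\mathsf{p}\to\mathsf{q}:\{\lambda_i;\mathsf{G}_i\}_{i\in I})=\{\mathsf{p}\mathsf{q}\lambda_i\cdot\sigma\mid i\in I,\ \sigma=\epsilon\text{ or }\sigma\in\mathrm{Tr}(\mathsf{G}_i)\}$. Depth: $\mathrm{depth}(\mathsf{p},\sigma)=|\sigma_1\cdot\alpha|$ if $\sigma=\sigma_1\cdot\alpha\cdot\sigma_2$ with $\mathsf{p}\notin\mathrm{part}(\sigma_1)$ and $\mathsf{p}\in\mathrm{part}(\alpha)$, and $0$ otherwise; $\mathrm{depth}(\mathsf{p},\mathsf{G})=\sup\{\mathrm{depth}(\mathsf{p},\sigma)\mid\sigma\in\mathrm{Tr}(\mathsf{G})\}$.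 $\mathsf{G}$ is bounded if $\mathrm{depth}(\mathsf{p},\mathsf{G}')$ is finite for every participant $\mathsf{p}$ and every subtree $\mathsf{G}'$ of $\mathsf{G}$. Event structure of $\mathsf{G}$: permutation equivalence $\sim$ is the least equivalence on traces with $\sigma\cdot\alpha\cdot\alpha'\cdot\sigma'\sim\sigma\cdot\alpha'\cdot\alpha\cdot\sigma'$ whenever $\mathrm{part}(\alpha)\cap\mathrm{part}(\alpha')=\emptyset$; $[\sigma]$ is the class of $\sigma$. A non-empty trace $\sigma=\sigma[1]\cdots\sigma[n]$ is pointed if for every $1\le i<n$ there is $j$ with $i<j\le n$ and $\mathrm{part}(\sigma[i])\cap\mathrm{part}(\sigma[j])\ne\emptyset$. A g-event is $[\sigma]$ with $\sigma$ pointed. Causal prefixing: $\alpha\circ[\sigma]=[\alpha\cdot\sigma]$ if $\mathrm{part}(\alpha)\cap\mathrm{part}(\sigma)\ne\emptyset$, $=[\sigma]$ otherwise; $\epsilon\circ\gamma=\gamma$, $(\alpha\cdot\sigma)\circ\gamma=\alpha\circ(\sigma\circ\gamma)$. $\mathrm{ev}(\sigma\cdot\alpha)=\sigma\circ[\alpha]$. Causality: $\gamma\le\gamma'$ if $\gamma=[\sigma]$ and $\gamma'=[\sigma\cdot\sigma']$ for some $\sigma,\sigma'$. Conflict: $\gamma\#\gamma'$ if $\gamma=[\sigma\cdot\mathsf{p}\mathsf{q}\lambda_1\cdot\sigma_1]$, $\gamma'=[\sigma\cdot\mathsf{p}\mathsf{q}\lambda_2\cdot\sigma_2]$ with $\lambda_1\ne\lambda_2$.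 $\mathcal{S}(\mathsf{G})=(\mathcal{E}(\mathsf{G}),\le_{\mathsf{G}},\#_{\mathsf{G}})$ with $\mathcal{E}(\mathsf{G})=\{\mathrm{ev}(\sigma)\mid\sigma\in\mathrm{Tr}(\mathsf{G})\}$ and the relations restricted to $\mathcal{E}(\mathsf{G})$. Semantic boundedness: for an event structure $S=(E,\le,\#)$ of this kind, a participant $\mathsf{p}$ is in $\mathrm{part}(S)$ if $\mathsf{p}\in\mathrm{part}(\sigma)$ for some $[\sigma]\in E$. For $k\in\mathbb{N}$, $\mathrm{depth}^k(\mathsf{p},[\sigma])=|\sigma|$ if $\sigma=\sigma_1\cdot\alpha_1\cdots\sigma_k\cdot\alpha_k$ with $\mathsf{p}\in\mathrm{part}(\alpha_i)$ and $\mathsf{p}\notin\mathrm{part}(\sigma_i)$ for $i=1,\dots,k$, and $0$ otherwise; $\mathrm{depth}^k(\mathsf{p},S)=\sup\{\mathrm{depth}^k(\mathsf{p},\gamma)\mid\gamma\in E\}$. $S$ is semantically bounded if $\mathrm{depth}^k(\mathsf{p},S)$ is finite for every $\mathsf{p}\in\mathrm{part}(S)$ and every $k\in\mathbb{N}$. *)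

theory Defs
  imports Main
begin

codatatype ('p, 'l) gtype =
    End
  | Msg 'p 'p "('l \<times> ('p, 'l) gtype) list"

inductive subtree :: "('p, 'l) gtype \<Rightarrow> ('p, 'l) gtype \<Rightarrow> bool" where
  subtree_refl: "subtree G G"
| subtree_step: "(l, G') \<in> set bs \<Longrightarrow> subtree G'' G' \<Longrightarrow> subtree G'' (Msg p q bs)"

definition regular :: "('p, 'l) gtype \<Rightarrow> bool" where
  "regular G \<longleftrightarrow> finite {G'. subtree G' G}"

definition wf_branching :: "('p, 'l) gtype \<Rightarrow> bool" where
  "wf_branching G \<longleftrightarrow> (\<forall>G'. subtree G' G \<longrightarrow>
      (case G' of End \<Rightarrow> True | Msg p q bs \<Rightarrow> bs \<noteq> [] \<and> distinct (map fst bs)))"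

definition global_type :: "('p, 'l) gtype \<Rightarrow> bool" where
  "global_type G \<longleftrightarrow> regular G \<and> wf_branching G"

type_synonym ('p, 'l) comm = "'p \<times> 'p \<times> 'l"
type_synonym ('p, 'l) trace = "('p, 'l) comm list"

fun part :: "('p, 'l) comm \<Rightarrow> 'p set" where
  "part (p, q, l) = {p, q}"

definition part_tr :: "('p, 'l) trace \<Rightarrow> 'p set" where
  "part_tr \<sigma> = (\<Union>a \<in> set \<sigma>. part a)"

inductive trace_of :: "('p, 'l) trace \<Rightarrow> ('p, 'l) gtype \<Rightarrow> bool" where
  Tr_single: "(l, G') \<in> set bs \<Longrightarrow> trace_of [(p, q, l)] (Msg p q bs)"
| Tr_cons: "(l, G') \<in> set bs \<Longrightarrow> trace_of \<sigma> G' \<Longrightarrow> trace_of ((p, q, l) # \<sigma>) (Msg p q bs)"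

definition Tr :: "('p, 'l) gtype \<Rightarrow> ('p, 'l) trace set" where
  "Tr G = {\<sigma>. trace_of \<sigma> G}"

definition depth_tr :: "'p \<Rightarrow> ('p, 'l) trace \<Rightarrow> nat" where
  "depth_tr p \<sigma> =
     (if \<exists>\<sigma>1 \<alpha> \<sigma>2. \<sigma> = \<sigma>1 @ \<alpha> # \<sigma>2 \<and> p \<notin> part_tr \<sigma>1 \<and> p \<in> part \<alpha>
      then (THE n. \<exists>\<sigma>1 \<alpha> \<sigma>2. \<sigma> = \<sigma>1 @ \<alpha> # \<sigma>2 \<and> p \<notin> part_tr \<sigma>1 \<and> p \<in> part \<alpha>
                    \<and> n = length (\<sigma>1 @ [\<alpha>]))
      else 0)"

text \<open>depth(p,G) is finite iff the set of trace depths is bounded above.\<close>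
definition bounded :: "('p, 'l) gtype \<Rightarrow> bool" where
  "bounded G \<longleftrightarrow> (\<forall>G' p. subtree G' G \<longrightarrow> bdd_above (depth_tr p ` Tr G'))"

inductive perm_step :: "('p, 'l) trace \<Rightarrow> ('p, 'l) trace \<Rightarrow> bool" where
  "part \<alpha> \<inter> part \<alpha>' = {} \<Longrightarrow> perm_step (\<sigma> @ \<alpha> # \<alpha>' # \<sigma>') (\<sigma> @ \<alpha>' # \<alpha> # \<sigma>')"

definition perm_eq :: "('p, 'l) trace \<Rightarrow> ('p, 'l) trace \<Rightarrow> bool" where
  "perm_eq = equivclp perm_step"

type_synonym ('p, 'l) gevent = "('p, 'l) trace set"

definition cls :: "('p, 'l) trace \<Rightarrow> ('p, 'l) gevent" where
  "cls \<sigma> = {\<tau>. perm_eq \<sigma> \<tau>}"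

definition pointed :: "('p, 'l) trace \<Rightarrow> bool" where
  "pointed \<sigma> \<longleftrightarrow> \<sigma> \<noteq> [] \<and>
     (\<forall>i. i + 1 < length \<sigma> \<longrightarrow> (\<exists>j. i < j \<and> j < length \<sigma> \<and> part (\<sigma> ! i) \<inter> part (\<sigma> ! j) \<noteq> {}))"

definition is_gevent :: "('p, 'l) gevent \<Rightarrow> bool" where
  "is_gevent \<gamma> \<longleftrightarrow> (\<exists>\<sigma>. pointed \<sigma> \<and> \<gamma> = cls \<sigma>)"

definition part_ev :: "('p, 'l) gevent \<Rightarrow> 'p set" where
  "part_ev \<gamma> = (\<Union>\<sigma> \<in> \<gamma>. part_tr \<sigma>)"

definition cpre :: "('p, 'l) comm \<Rightarrow> ('p, 'l) gevent \<Rightarrow> ('p, 'l) gevent" where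
  "cpre \<alpha> \<gamma> = (if part \<alpha> \<inter> part_ev \<gamma> \<noteq> {}
                then {\<tau>. \<exists>\<sigma> \<in> \<gamma>. perm_eq (\<alpha> # \<sigma>) \<tau>} else \<gamma>)"

fun cpre_tr :: "('p, 'l) trace \<Rightarrow> ('p, 'l) gevent \<Rightarrow> ('p, 'l) gevent" where
  "cpre_tr [] \<gamma> = \<gamma>"
| "cpre_tr (\<alpha> # \<sigma>) \<gamma> = cpre \<alpha> (cpre_tr \<sigma> \<gamma>)"

text \<open>ev(sigma . alpha) = sigma o [alpha] (only applied to non-empty traces).\<close>
definition ev :: "('p, 'l) trace \<Rightarrow> ('p, 'l) gevent" where
  "ev \<sigma> = cpre_tr (butlast \<sigma>) (cls [last \<sigma>])"

definition causal :: "('p, 'l) gevent \<Rightarrow> ('p, 'l) gevent \<Rightarrow> bool" where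
  "causal \<gamma> \<gamma>' \<longleftrightarrow> (\<exists>\<sigma> \<sigma>'. \<gamma> = cls \<sigma> \<and> \<gamma>' = cls (\<sigma> @ \<sigma>'))"

definition conflict :: "('p, 'l) gevent \<Rightarrow> ('p, 'l) gevent \<Rightarrow> bool" where
  "conflict \<gamma> \<gamma>' \<longleftrightarrow> (\<exists>\<sigma> p q l1 l2 \<sigma>1 \<sigma>2. l1 \<noteq> l2 \<and>
      \<gamma> = cls (\<sigma> @ (p, q, l1) # \<sigma>1) \<and> \<gamma>' = cls (\<sigma> @ (p, q, l2) # \<sigma>2))"

definition events :: "('p, 'l) gtype \<Rightarrow> ('p, 'l) gevent set" where
  "events G = ev ` Tr G"

type_synonym ('p, 'l) evstruct =
  "('p, 'l) gevent set \<times> (('p, 'l) gevent \<Rightarrow> ('p, 'l) gevent \<Rightarrow> bool)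
                        \<times> (('p, 'l) gevent \<Rightarrow> ('p, 'l) gevent \<Rightarrow> bool)"

definition evstruct_of :: "('p, 'l) gtype \<Rightarrow> ('p, 'l) evstruct" where
  "evstruct_of G =
     (events G,
      (\<lambda>\<gamma> \<gamma>'. \<gamma> \<in> events G \<and> \<gamma>' \<in> events G \<and> causal \<gamma> \<gamma>'),
      (\<lambda>\<gamma> \<gamma>'. \<gamma> \<in> events G \<and> \<gamma>' \<in> events G \<and> conflict \<gamma> \<gamma>'))"

definition part_es :: "('p, 'l) evstruct \<Rightarrow> 'p set" where
  "part_es S = {p. \<exists>\<gamma> \<in> fst S. \<exists>\<sigma> \<in> \<gamma>. p \<in> part_tr \<sigma>}"

definition kdecomp :: "nat \<Rightarrow> 'p \<Rightarrow> ('p, 'l) trace \<Rightarrow> bool" where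
  "kdecomp k p \<sigma> \<longleftrightarrow> (\<exists>xs. length xs = k \<and> \<sigma> = concat (map (\<lambda>(s, a). s @ [a]) xs) \<and>
       (\<forall>(s, a) \<in> set xs. p \<in> part a \<and> p \<notin> part_tr s))"

definition depthk :: "nat \<Rightarrow> 'p \<Rightarrow> ('p, 'l) gevent \<Rightarrow> nat" where
  "depthk k p \<gamma> =
     (if \<exists>\<sigma> \<in> \<gamma>. kdecomp k p \<sigma> then (THE n. \<exists>\<sigma> \<in> \<gamma>. kdecomp k p \<sigma> \<and> n = length \<sigma>) else 0)"

definition sem_bounded :: "('p, 'l) evstruct \<Rightarrow> bool" where
  "sem_bounded S \<longleftrightarrow> (\<forall>p \<in> part_es S. \<forall>k. bdd_above (depthk k p ` fst S))"

end

theory Submission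
  imports Defs
begin

fun ptd :: "('p, 'l) trace \<Rightarrow> bool" where
  "ptd [] = False"
| "ptd [a] = True"
| "ptd (a # b # xs) = (ptd (b # xs) \<and> part a \<inter> part_tr (b # xs) \<noteq> {})"

definition cnt :: "'p \<Rightarrow> ('p, 'l) trace \<Rightarrow> nat" where
  "cnt p xs = length (filter (\<lambda>a. p \<in> part a) xs)"

lemma part_tr_simps[simp]: "part_tr [] = {}" "part_tr (a # xs) = part a \<union> part_tr xs"
  "part_tr (xs @ ys) = part_tr xs \<union> part_tr ys"
  by (auto simp: part_tr_def)

lemma perm_step_sym: "perm_step x y \<Longrightarrow> perm_step y x"
  by (induction rule: perm_step.induct) (metis inf_commute perm_step.intros)

lemma perm_step_length: "perm_step x y \<Longrightarrow> length x = length y"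
  by (induction rule: perm_step.induct) auto

lemma perm_step_part: "perm_step x y \<Longrightarrow> part_tr x = part_tr y"
  by (induction rule: perm_step.induct) auto

lemma perm_step_cnt: "perm_step x y \<Longrightarrow> cnt p x = cnt p y"
  by (induction rule: perm_step.induct) (auto simp: cnt_def)

lemma ptd_not_last2: "ptd (\<sigma> @ [a, b]) \<Longrightarrow> part a \<inter> part b \<noteq> {}"
proof (induction \<sigma>)
  case Nil then show ?case by simp
next
  case (Cons x \<sigma>) then show ?case by (cases \<sigma>) auto
qed

lemma ptd_swap:
  assumes "part a \<inter> part b = {}" "ptd (\<sigma> @ a # b # \<sigma>')"
  shows "ptd (\<sigma> @ b # a # \<sigma>')"
  using assms
proof (induction \<sigma>)
  case Nil
  then have ne: "\<sigma>' \<noteq> []" using ptd_not_last2[of "[]" a b] by auto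
  then obtain c cs where c: "\<sigma>' = c # cs" by (cases \<sigma>') auto
  show ?case using Nil c by auto
next
  case (Cons x \<sigma>)
  then show ?case by (cases \<sigma>) auto
qed

lemma perm_step_ptd: "perm_step x y \<Longrightarrow> ptd x \<Longrightarrow> ptd y \<and> last x = last y"
proof (induction rule: perm_step.induct)
  case (1 \<alpha> \<alpha>' \<sigma> \<sigma>')
  have "\<sigma>' \<noteq> []" using 1 ptd_not_last2[of \<sigma> \<alpha> \<alpha>'] by auto
  then show ?case using 1 ptd_swap[OF 1(1) 1(2)] by auto
qed

lemma equivclp_inv:
  assumes "equivclp r x y" "\<And>x y. r x y \<Longrightarrow> P x = P y"
  shows "P x = P y"
  using assms(1) by (induction rule: equivclp_induct) (auto dest: assms(2))

lemma perm_eq_length: "perm_eq x y \<Longrightarrow> length x = length y"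
  unfolding perm_eq_def using equivclp_inv[of perm_step x y length] perm_step_length by blast

lemma perm_eq_part: "perm_eq x y \<Longrightarrow> part_tr x = part_tr y"
  unfolding perm_eq_def using equivclp_inv[of perm_step x y part_tr] perm_step_part by blast

lemma perm_eq_cnt: "perm_eq x y \<Longrightarrow> cnt p x = cnt p y"
  unfolding perm_eq_def using equivclp_inv[of perm_step x y "cnt p"] perm_step_cnt[of _ _ p] by blast

lemma perm_eq_ptd: "perm_eq x y \<Longrightarrow> ptd x \<Longrightarrow> ptd y \<and> last y = last x"
proof -
  assume a: "perm_eq x y" "ptd x"
  have "(ptd x \<and> last x = last x) = (ptd y \<and> last y = last x)"
    using a(1) unfolding perm_eq_def
    by (rule equivclp_inv[where P="\<lambda>z. ptd z \<and> last z = last x"])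
       (metis perm_step_ptd perm_step_sym)
  then show ?thesis using a by auto
qed

lemma perm_eq_cons: "perm_eq x y \<Longrightarrow> perm_eq (a # x) (a # y)"
  unfolding perm_eq_def
proof (induction rule: equivclp_induct)
  case base then show ?case by simp
next
  case (step y z)
  have "perm_step (a # y) (a # z) \<or> perm_step (a # z) (a # y)"
    using step(2) by (auto elim!: perm_step.cases intro: perm_step.intros[where \<sigma>="a # _", simplified])
  then show ?case using step(3) equivclp_into_equivclp by metis
qed


lemma cls_mem: "\<tau> \<in> cls \<mu> \<longleftrightarrow> perm_eq \<mu> \<tau>"
  by (simp add: cls_def)

lemma part_ev_cls: "part_ev (cls \<mu>) = part_tr \<mu>"
proof
  show "part_ev (cls \<mu>) \<subseteq> part_tr \<mu>"
  proof
    fix x assume "x \<in> part_ev (cls \<mu>)"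
    then obtain \<sigma> where "perm_eq \<mu> \<sigma>" "x \<in> part_tr \<sigma>" unfolding part_ev_def cls_def by blast
    then show "x \<in> part_tr \<mu>" using perm_eq_part by metis
  qed
  have "\<mu> \<in> cls \<mu>" by (simp add: cls_def perm_eq_def)
  then show "part_tr \<mu> \<subseteq> part_ev (cls \<mu>)" unfolding part_ev_def by blast
qed

lemma perm_eq_trans: "perm_eq x y \<Longrightarrow> perm_eq y z \<Longrightarrow> perm_eq x z"
  unfolding perm_eq_def by (rule equivclp_trans)

lemma cpre_cls_prepend:
  "{\<tau>. \<exists>\<sigma> \<in> cls \<mu>. perm_eq (\<alpha> # \<sigma>) \<tau>} = cls (\<alpha> # \<mu>)"
proof
  show "{\<tau>. \<exists>\<sigma> \<in> cls \<mu>. perm_eq (\<alpha> # \<sigma>) \<tau>} \<subseteq> cls (\<alpha> # \<mu>)"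
  proof
    fix \<tau> assume "\<tau> \<in> {\<tau>. \<exists>\<sigma> \<in> cls \<mu>. perm_eq (\<alpha> # \<sigma>) \<tau>}"
    then obtain \<sigma> where "perm_eq \<mu> \<sigma>" "perm_eq (\<alpha> # \<sigma>) \<tau>" by (auto simp: cls_def)
    then have "perm_eq (\<alpha> # \<mu>) \<tau>" using perm_eq_cons perm_eq_trans by blast
    then show "\<tau> \<in> cls (\<alpha> # \<mu>)" by (simp add: cls_def)
  qed
  show "cls (\<alpha> # \<mu>) \<subseteq> {\<tau>. \<exists>\<sigma> \<in> cls \<mu>. perm_eq (\<alpha> # \<sigma>) \<tau>}"
  proof
    fix \<tau> assume t: "\<tau> \<in> cls (\<alpha> # \<mu>)"
    have "\<mu> \<in> cls \<mu>" by (simp add: cls_def perm_eq_def)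
    moreover have "perm_eq (\<alpha> # \<mu>) \<tau>" using t by (simp add: cls_def)
    ultimately show "\<tau> \<in> {\<tau>. \<exists>\<sigma> \<in> cls \<mu>. perm_eq (\<alpha> # \<sigma>) \<tau>}" by blast
  qed
qed

lemma last_in_part: "xs \<noteq> [] \<Longrightarrow> part (last xs) \<subseteq> part_tr xs"
  by (induction xs) auto

lemma cpre_inv:
  "\<exists>\<mu>. cpre_tr \<rho> (cls [\<beta>]) = cls \<mu> \<and> ptd \<mu> \<and> last \<mu> = \<beta> \<and> length \<mu> \<le> Suc (length \<rho>)
      \<and> (\<forall>p. p \<in> part \<beta> \<longrightarrow> cnt p \<mu> = Suc (cnt p \<rho>))"
proof (induction \<rho>)
  case Nil
  show ?case by (rule exI[of _ "[\<beta>]"]) (auto simp: cnt_def)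
next
  case (Cons \<alpha> \<rho>)
  then obtain \<mu> where m: "cpre_tr \<rho> (cls [\<beta>]) = cls \<mu>" "ptd \<mu>" "last \<mu> = \<beta>"
    "length \<mu> \<le> Suc (length \<rho>)" "\<forall>p. p \<in> part \<beta> \<longrightarrow> cnt p \<mu> = Suc (cnt p \<rho>)" by blast
  have ne: "\<mu> \<noteq> []" using m(2) by auto
  show ?case
  proof (cases "part \<alpha> \<inter> part_tr \<mu> \<noteq> {}")
    case True
    have e: "cpre_tr (\<alpha> # \<rho>) (cls [\<beta>]) = cls (\<alpha> # \<mu>)"
      using True m(1) by (simp add: cpre_def part_ev_cls cpre_cls_prepend)
    have "ptd (\<alpha> # \<mu>)" using ne m(2) True by (cases \<mu>) auto
    then show ?thesis using e m ne
      by (intro exI[of _ "\<alpha> # \<mu>"]) (auto simp: cnt_def)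
  next
    case False
    have e: "cpre_tr (\<alpha> # \<rho>) (cls [\<beta>]) = cls \<mu>"
      using False m(1) by (simp add: cpre_def part_ev_cls)
    have "part \<beta> \<subseteq> part_tr \<mu>" using last_in_part[OF ne] m(3) by simp
    then have "\<forall>p. p \<in> part \<beta> \<longrightarrow> p \<notin> part \<alpha>" using False by blast
    then show ?thesis using e m
      by (intro exI[of _ \<mu>]) (auto simp: cnt_def)
  qed
qed

lemma ev_inv:
  assumes "\<sigma> \<noteq> []"
  shows "\<exists>\<mu>. ev \<sigma> = cls \<mu> \<and> ptd \<mu> \<and> last \<mu> = last \<sigma> \<and> length \<mu> \<le> length \<sigma>
      \<and> (\<forall>p. p \<in> part (last \<sigma>) \<longrightarrow> cnt p \<mu> = cnt p \<sigma>)"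
proof -
  obtain \<mu> where m: "cpre_tr (butlast \<sigma>) (cls [last \<sigma>]) = cls \<mu>" "ptd \<mu>" "last \<mu> = last \<sigma>"
    "length \<mu> \<le> Suc (length (butlast \<sigma>))"
    "\<forall>p. p \<in> part (last \<sigma>) \<longrightarrow> cnt p \<mu> = Suc (cnt p (butlast \<sigma>))"
    using cpre_inv by blast
  have s: "\<sigma> = butlast \<sigma> @ [last \<sigma>]" using assms by simp
  have "\<forall>p. p \<in> part (last \<sigma>) \<longrightarrow> cnt p \<sigma> = Suc (cnt p (butlast \<sigma>))"
    using s by (metis (no_types, lifting) cnt_def filter.simps length_append_singleton filter_append append.right_neutral)
  then show ?thesis using m assms unfolding ev_def
    by (intro exI[of _ \<mu>]) auto
qed

lemma trace_prefix: "trace_of (xs @ ys) G \<Longrightarrow> xs \<noteq> [] \<Longrightarrow> trace_of xs G"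
proof (induction "xs @ ys" G arbitrary: xs rule: trace_of.induct)
  case (Tr_single l G' bs p q)
  then have "xs = [(p, q, l)]" by (cases xs) auto
  then show ?case using Tr_single by (auto intro: trace_of.intros)
next
  case (Tr_cons l G' bs \<sigma> p q)
  then obtain xs' where x: "xs = (p, q, l) # xs'" "\<sigma> = xs' @ ys" by (cases xs) auto
  show ?case
  proof (cases "xs' = []")
    case True then show ?thesis using x Tr_cons by (auto intro: trace_of.intros)
  next
    case False then show ?thesis using x Tr_cons by (auto intro: trace_of.intros)
  qed
qed

lemma trace_suffix: "trace_of (xs @ ys) G \<Longrightarrow> xs \<noteq> [] \<Longrightarrow> ys \<noteq> []
   \<Longrightarrow> \<exists>G''. subtree G'' G \<and> trace_of ys G''"
proof (induction "xs @ ys" G arbitrary: xs rule: trace_of.induct)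
  case (Tr_single l G' bs p q)
  then show ?case by (cases xs) auto
next
  case (Tr_cons l G' bs \<sigma> p q)
  then obtain xs' where x: "xs = (p, q, l) # xs'" "\<sigma> = xs' @ ys" by (cases xs) auto
  show ?case
  proof (cases "xs' = []")
    case True then show ?thesis using x Tr_cons
      by (auto intro: subtree.intros)
  next
    case False
    have "\<exists>G''. subtree G'' G' \<and> trace_of ys G''" using Tr_cons x False by blast
    then show ?thesis using Tr_cons(1) by (meson subtree.intros)
  qed
qed

lemma subtree_trans: "subtree B C \<Longrightarrow> subtree A B \<Longrightarrow> subtree A C"
  by (induction rule: subtree.induct) (auto intro: subtree.intros)

lemma first_unique:
  "s1 @ a # s2 = t1 @ b # t2 \<Longrightarrow> p \<notin> part_tr s1 \<Longrightarrow> p \<notin> part_tr t1 \<Longrightarrow> p \<in> part a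
   \<Longrightarrow> p \<in> part b \<Longrightarrow> s1 = t1"
proof (induction s1 arbitrary: t1)
  case Nil then show ?case by (cases t1) auto
next
  case (Cons x s1) then show ?case by (cases t1) auto
qed

lemma depth_tr_eq:
  assumes "p \<notin> part_tr ys" "p \<in> part x"
  shows "depth_tr p (ys @ [x]) = Suc (length ys)"
proof -
  have ex: "\<exists>\<sigma>1 \<alpha> \<sigma>2. ys @ [x] = \<sigma>1 @ \<alpha> # \<sigma>2 \<and> p \<notin> part_tr \<sigma>1 \<and> p \<in> part \<alpha>"
    using assms by blast
  have "(THE n. \<exists>\<sigma>1 \<alpha> \<sigma>2. ys @ [x] = \<sigma>1 @ \<alpha> # \<sigma>2 \<and> p \<notin> part_tr \<sigma>1 \<and> p \<in> part \<alpha>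
                    \<and> n = length (\<sigma>1 @ [\<alpha>])) = Suc (length ys)"
  proof (rule the_equality)
    show "\<exists>\<sigma>1 \<alpha> \<sigma>2. ys @ [x] = \<sigma>1 @ \<alpha> # \<sigma>2 \<and> p \<notin> part_tr \<sigma>1 \<and> p \<in> part \<alpha>
                    \<and> Suc (length ys) = length (\<sigma>1 @ [\<alpha>])" using assms
      by (intro exI[of _ ys] exI[of _ x] exI[of _ "[]"]) simp
  next
    fix n assume "\<exists>\<sigma>1 \<alpha> \<sigma>2. ys @ [x] = \<sigma>1 @ \<alpha> # \<sigma>2 \<and> p \<notin> part_tr \<sigma>1 \<and> p \<in> part \<alpha>
                    \<and> n = length (\<sigma>1 @ [\<alpha>])"
    then obtain \<sigma>1 \<alpha> \<sigma>2 where h: "ys @ [x] = \<sigma>1 @ \<alpha> # \<sigma>2" "p \<notin> part_tr \<sigma>1" "p \<in> part \<alpha>"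
      "n = length (\<sigma>1 @ [\<alpha>])" by blast
    have "\<sigma>1 = ys" using first_unique[of \<sigma>1 \<alpha> \<sigma>2 ys x "[]" p] h assms by auto
    then show "n = Suc (length ys)" using h by simp
  qed
  then show ?thesis using ex unfolding depth_tr_def by simp
qed

lemma length_bound:
  assumes D: "\<And>G' \<sigma>. subtree G' G \<Longrightarrow> trace_of \<sigma> G' \<Longrightarrow> depth_tr p \<sigma> \<le> D"
  shows "subtree G' G \<Longrightarrow> trace_of \<sigma> G' \<Longrightarrow> \<sigma> \<noteq> [] \<Longrightarrow> p \<in> part (last \<sigma>)
     \<Longrightarrow> length \<sigma> \<le> cnt p \<sigma> * D"
proof (induction "length \<sigma>" arbitrary: \<sigma> G' rule: less_induct)
  case less
  have "last \<sigma> \<in> set \<sigma>" using less(4) by simp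
  then have "\<exists>x\<in>set \<sigma>. p \<in> part x" using less(5) by blast
  from split_list_first_prop[OF this]
  obtain ys x zs where s: "\<sigma> = ys @ x # zs" "p \<in> part x" "\<forall>y\<in>set ys. p \<notin> part y"
    by blast
  have np: "p \<notin> part_tr ys" using s(3) by (auto simp: part_tr_def)
  have c0: "cnt p ys = 0" using s(3) by (auto simp: cnt_def filter_empty_conv)
  have "trace_of (ys @ [x]) G'" using trace_prefix[of "ys @ [x]" zs G'] less(3) s(1) by simp
  then have "depth_tr p (ys @ [x]) \<le> D" by (rule D[OF less(2)])
  then have d: "Suc (length ys) \<le> D" unfolding depth_tr_eq[OF np s(2)] .
  show ?case
  proof (cases "zs = []")
    case True
    then show ?thesis using s d c0 by (simp add: cnt_def)
  next
    case False
    obtain G'' where g: "subtree G'' G'" "trace_of zs G''"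
      using trace_suffix[of "ys @ [x]" zs G'] less(3) s(1) False by auto
    have lz: "length zs < length \<sigma>" using s(1) by simp
    have "last zs = last \<sigma>" using s(1) False by simp
    then have "p \<in> part (last zs)" using less(5) by simp
    then have "length zs \<le> cnt p zs * D"
      using less(1)[OF lz subtree_trans[OF less(2) g(1)] g(2) False] by simp
    moreover have "cnt p \<sigma> = Suc (cnt p zs)" using s c0 by (simp add: cnt_def)
    ultimately show ?thesis using s d by simp
  qed
qed

lemma kdecomp_props:
  fixes p :: 'p and \<tau> :: "('p, 'l) trace"
  assumes "kdecomp k p \<tau>" "k > 0"
  shows "\<tau> \<noteq> [] \<and> p \<in> part (last \<tau>) \<and> cnt p \<tau> = k"
proof -
  obtain xs where x: "length xs = k" "\<tau> = concat (map (\<lambda>(s, a). s @ [a]) xs)"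
    "\<forall>(s, a) \<in> set xs. p \<in> part a \<and> p \<notin> part_tr s"
    using assms(1) unfolding kdecomp_def by blast
  have "\<forall>(s, a) \<in> set xs. p \<in> part a \<and> p \<notin> part_tr s \<Longrightarrow>
      cnt p (concat (map (\<lambda>(s, a). s @ [a]) xs)) = length xs" for xs :: "(('p, 'l) trace \<times> ('p, 'l) comm) list"
  proof (induction xs)
    case Nil then show ?case by (simp add: cnt_def)
  next
    case (Cons y xs)
    obtain s a where y: "y = (s, a)" by (metis surj_pair)
    have "filter (\<lambda>a. p \<in> part a) s = []" using Cons(2) y
      by (auto simp: filter_empty_conv part_tr_def)
    then show ?case using Cons y by (auto simp: cnt_def)
  qed
  then have c: "cnt p \<tau> = k" using x by simp
  obtain ys y where "xs = ys @ [y]" using x(1) assms(2) by (cases xs rule: rev_cases) auto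
  moreover obtain s a where "y = (s, a)" by (metis surj_pair)
  ultimately have "\<tau> = concat (map (\<lambda>(s, a). s @ [a]) ys) @ s @ [a]" "p \<in> part a"
    using x by auto
  then show ?thesis using c by simp
qed

lemma depthk_cls:
  assumes "\<exists>\<tau> \<in> cls \<mu>. kdecomp k p \<tau>"
  shows "depthk k p (cls \<mu>) = length \<mu>"
proof -
  have "(THE n. \<exists>\<sigma> \<in> cls \<mu>. kdecomp k p \<sigma> \<and> n = length \<sigma>) = length \<mu>"
  proof (rule the_equality)
    show "\<exists>\<sigma> \<in> cls \<mu>. kdecomp k p \<sigma> \<and> length \<mu> = length \<sigma>"
    proof -
      obtain \<tau> where t: "\<tau> \<in> cls \<mu>" "kdecomp k p \<tau>" using assms by blast
      have "length \<mu> = length \<tau>" using t(1) perm_eq_length unfolding cls_mem by blast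
      then show ?thesis using t by blast
    qed
    show "\<And>n. \<exists>\<sigma> \<in> cls \<mu>. kdecomp k p \<sigma> \<and> n = length \<sigma> \<Longrightarrow> n = length \<mu>"
      by (metis cls_mem perm_eq_length)
  qed
  then show ?thesis using assms unfolding depthk_def by simp
qed

theorem mainTheorem4:
  fixes G :: "('p, 'l) gtype"
  assumes "global_type G"
    and "bounded G"
  shows "sem_bounded (evstruct_of G)"
  unfolding sem_bounded_def
proof (intro ballI allI)
  fix p :: 'p and k :: nat
  have fin: "finite {G'. subtree G' G}" using assms(1) by (simp add: global_type_def regular_def)
  have "bdd_above (\<Union>G'\<in>{G'. subtree G' G}. depth_tr p ` Tr G')"
    using fin assms(2) by (simp add: bounded_def)
  then obtain D where D0: "\<And>x. x \<in> (\<Union>G'\<in>{G'. subtree G' G}. depth_tr p ` Tr G') \<Longrightarrow> x \<le> D"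
    unfolding bdd_above_def by blast
  have D: "\<And>G' \<sigma>. subtree G' G \<Longrightarrow> trace_of \<sigma> G' \<Longrightarrow> depth_tr p \<sigma> \<le> D"
  proof -
    fix G' \<sigma> assume "subtree G' G" "trace_of \<sigma> G'"
    then have "depth_tr p \<sigma> \<in> (\<Union>G'\<in>{G'. subtree G' G}. depth_tr p ` Tr G')"
      unfolding Tr_def by blast
    then show "depth_tr p \<sigma> \<le> D" by (rule D0)
  qed
  have "depthk k p \<gamma> \<le> k * D" if g: "\<gamma> \<in> events G" for \<gamma>
  proof -
    obtain \<sigma> where s: "trace_of \<sigma> G" "\<gamma> = ev \<sigma>" using g unfolding events_def Tr_def by blast
    have ne: "\<sigma> \<noteq> []" using s(1) by (cases rule: trace_of.cases) auto
    obtain \<mu> where m: "ev \<sigma> = cls \<mu>" "ptd \<mu>" "last \<mu> = last \<sigma>" "length \<mu> \<le> length \<sigma>"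
      "\<forall>p. p \<in> part (last \<sigma>) \<longrightarrow> cnt p \<mu> = cnt p \<sigma>" using ev_inv[OF ne] by blast
    show ?thesis
    proof (cases "\<exists>\<tau> \<in> cls \<mu>. kdecomp k p \<tau>")
      case False then show ?thesis using s m by (simp add: depthk_def)
    next
      case True
      then obtain \<tau> where t0: "\<tau> \<in> cls \<mu>" and t2: "kdecomp k p \<tau>" by blast
      have t1: "perm_eq \<mu> \<tau>" using t0 by (simp add: cls_mem)
      have mne: "\<mu> \<noteq> []" using m(2) by (metis ptd.simps(1))
      have lt: "length \<mu> = length \<tau>" by (rule perm_eq_length[OF t1])
      have "k \<noteq> 0"
      proof
        assume "k = 0"
        then have "\<tau> = []" using t2 by (simp add: kdecomp_def)
        then show False using lt mne by simp
      qed
      then have kp: "\<tau> \<noteq> [] \<and> p \<in> part (last \<tau>) \<and> cnt p \<tau> = k"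
        using kdecomp_props[OF t2] by blast
      have "last \<tau> = last \<sigma>" using perm_eq_ptd[OF t1 m(2)] m(3) by simp
      then have pl: "p \<in> part (last \<sigma>)" using kp by simp
      have "cnt p \<mu> = cnt p \<tau>" by (rule perm_eq_cnt[OF t1])
      then have ck: "cnt p \<sigma> = k" using m(5) pl kp by simp
      have "length \<sigma> \<le> cnt p \<sigma> * D" by (rule length_bound[OF D subtree_refl s(1) ne pl])
      then have lb: "length \<sigma> \<le> k * D" using ck by simp
      have "depthk k p \<gamma> = length \<mu>" using depthk_cls[OF True] s(2) m(1) by simp
      then show ?thesis using m(4) lb by linarith
    qed
  qed
  then show "bdd_above (depthk k p ` fst (evstruct_of G))"
    unfolding evstruct_of_def fst_conv by (rule bdd_aboveI2)
qed

end
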